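(* For every integer $n\ge1$, $M^L(n+2)\le 4K(n)$.
   Context: $\mathbb{F}=\{0,1\}$. The binary $n$-dimensional hypercube $\mathbb{F}^n$ is the graph on $\mathbb{F}^n$ where two words are adjacent iff their Hamming distance is $1$. For a nonempty $C\subseteq\mathbb{F}^n$, $I(\mathbf{x})=N[\mathbf{x}]\cap C$ with $N[\mathbf{x}]$ the words at Hamming distance $\le1$ from $\mathbf{x}$. $C$ is a covering code if $I(\mathbf{x})\ne\emptyset$ for all $\mathbf{x}\in\mathbb{F}^n$; $C$ is a local identifying code if it is covering and $I(\mathbf{x})\ne I(\mathbf{y})$ for all adjacent $\mathbf{x},\mathbf{y}$. $K(n)$ is the minimum cardinality of a covering code in $\mathbb{F}^n$, and $M^L(n)$ the minimum cardinality of a local identifying code in $\mathbb{F}^n$. *)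

theory Defs
  imports Main
begin

(* Binary words of length n: elements of F^n, F = {0,1}, represented as bool lists *)
definition words :: "nat \<Rightarrow> bool list set" where
  "words n = {x. length x = n}"

definition hamming :: "bool list \<Rightarrow> bool list \<Rightarrow> nat" where
  "hamming x y = length (filter (\<lambda>(a, b). a \<noteq> b) (zip x y))"

definition closed_nbhd :: "nat \<Rightarrow> bool list \<Rightarrow> bool list set" where
  "closed_nbhd n x = {y \<in> words n. hamming x y \<le> 1}"

definition I_set :: "nat \<Rightarrow> bool list set \<Rightarrow> bool list \<Rightarrow> bool list set" where
  "I_set n C x = closed_nbhd n x \<inter> C"

definition covering_code :: "nat \<Rightarrow> bool list set \<Rightarrow> bool" where
  "covering_code n C \<longleftrightarrow> C \<noteq> {} \<and> C \<subseteq> words n \<and>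
     (\<forall>x \<in> words n. I_set n C x \<noteq> {})"

definition local_identifying_code :: "nat \<Rightarrow> bool list set \<Rightarrow> bool" where
  "local_identifying_code n C \<longleftrightarrow> covering_code n C \<and>
     (\<forall>x \<in> words n. \<forall>y \<in> words n. hamming x y = 1 \<longrightarrow> I_set n C x \<noteq> I_set n C y)"

definition K :: "nat \<Rightarrow> nat" where
  "K n = (LEAST k. \<exists>C. covering_code n C \<and> card C = k)"

definition M_L :: "nat \<Rightarrow> nat" where
  "M_L n = (LEAST k. \<exists>C. local_identifying_code n C \<and> card C = k)"

end

theory Submission
  imports Defs
begin

lemma ham_nil1[simp]: "hamming [] y = 0" by (simp add: hamming_def)
lemma ham_nil2[simp]: "hamming x [] = 0" by (simp add: hamming_def)
lemma ham_cons[simp]: "hamming (a#x) (b#y) = (if a \<noteq> b then 1 else 0) + hamming x y"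
  by (simp add: hamming_def)

lemma ham_sym: "hamming x y = hamming y x"
  by (induction x arbitrary: y) (auto simp: neq_Nil_conv, case_tac y, auto)

lemma ham_self[simp]: "hamming x x = 0"
  by (induction x) auto

lemma ham_0: "length u = length v \<Longrightarrow> hamming u v = 0 \<longleftrightarrow> u = v"
  by (induction u v rule: list_induct2) (auto split: if_splits)

lemma ham_app: "length u = length v \<Longrightarrow> hamming (u@s) (v@t) = hamming u v + hamming s t"
  by (induction u v rule: list_induct2) auto

lemma ham_par: "length c = length u \<Longrightarrow> length u = length v \<Longrightarrow>
   even (hamming c u + hamming c v + hamming u v)"
proof (induction c arbitrary: u v)
  case Nil then show ?case by simp
next
  case (Cons a c)
  obtain b u' where u: "u = b#u'" using Cons.prems by (cases u) auto
  obtain d v' where v: "v = d#v'" using Cons.prems u by (cases v) auto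
  have "even (hamming c u' + hamming c v' + hamming u' v')"
    using Cons u v by simp
  then show ?case using u v by (cases a; cases b; cases d) auto
qed

lemma words2: "words 2 = {[True,True],[True,False],[False,True],[False,False]}"
proof -
  have "length x = 2 \<longleftrightarrow> x \<in> {[True,True],[True,False],[False,True],[False,False]}" for x :: "bool list"
    by (cases x; case_tac "tl x"; auto; case_tac a; case_tac aa; auto)
  then show ?thesis by (auto simp: words_def)
qed

lemma w2_adj: "s \<in> words 2 \<Longrightarrow> \<exists>r\<in>words 2. hamming s r = 1"
  unfolding words2 by (auto simp add: words2)

lemma w2_adj2: "s \<in> words 2 \<Longrightarrow> t \<in> words 2 \<Longrightarrow> hamming s t = 1 \<Longrightarrow>
   \<exists>r\<in>words 2. hamming s r = 1 \<and> hamming t r > 1"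
  unfolding words2 by auto

lemma finite_words: "finite (words n)"
proof -
  have "words n = {xs. set xs \<subseteq> (UNIV::bool set) \<and> length xs = n}" by (auto simp: words_def)
  then show ?thesis using finite_lists_length_eq[of "UNIV::bool set" n] by simp
qed

lemma card_w2: "card (words 2) = 4"
  unfolding words2 by simp

definition ext :: "bool list set \<Rightarrow> bool list set" where
  "ext C = (\<lambda>(c,r). c @ r) ` (C \<times> words 2)"

lemma mem_I:
  assumes "C \<subseteq> words n" "u \<in> words n" "s \<in> words 2" "c \<in> words n" "r \<in> words 2"
  shows "c@r \<in> I_set (n+2) (ext C) (u@s) \<longleftrightarrow> c \<in> C \<and> hamming u c + hamming s r \<le> 1"
proof -
  have "c@r \<in> ext C \<longleftrightarrow> c \<in> C"
  proof
    assume "c@r \<in> ext C"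
    then obtain c' r' where "c' \<in> C" "r' \<in> words 2" "c@r = c'@r'" unfolding ext_def by auto
    moreover have "length c' = length c" using assms \<open>c' \<in> C\<close> by (auto simp: words_def)
    ultimately show "c \<in> C" by (auto simp: append_eq_append_conv)
  next
    assume "c \<in> C" then show "c@r \<in> ext C" using assms unfolding ext_def by auto
  qed
  moreover have "c@r \<in> words (n+2)" using assms by (auto simp: words_def)
  moreover have "hamming (u@s) (c@r) = hamming u c + hamming s r"
    using assms by (intro ham_app) (auto simp: words_def)
  ultimately show ?thesis unfolding I_set_def closed_nbhd_def by auto
qed

lemma split_word: "x \<in> words (n+2) \<Longrightarrow> \<exists>u s. x = u@s \<and> u \<in> words n \<and> s \<in> words 2"
  by (rule exI[of _ "take n x"], rule exI[of _ "drop n x"]) (auto simp: words_def)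

lemma ext_code:
  assumes cov: "covering_code n C"
  shows "local_identifying_code (n+2) (ext C)"
proof -
  have Cw: "C \<subseteq> words n" and ne: "C \<noteq> {}" and covI: "\<And>x. x \<in> words n \<Longrightarrow> I_set n C x \<noteq> {}"
    using cov unfolding covering_code_def by auto
  have cov': "\<And>u. u \<in> words n \<Longrightarrow> \<exists>c\<in>C. hamming u c \<le> 1"
    using covI unfolding I_set_def closed_nbhd_def by auto
  have subw: "ext C \<subseteq> words (n+2)" using Cw unfolding ext_def by (auto simp: words_def)
  have cover: "I_set (n+2) (ext C) x \<noteq> {}" if xw: "x \<in> words (n+2)" for x
  proof -
    obtain u s where x: "x = u@s" "u \<in> words n" "s \<in> words 2" using split_word[OF xw] by blast
    obtain c where c: "c \<in> C" "hamming u c \<le> 1" using cov' x by blast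
    have "c@s \<in> I_set (n+2) (ext C) x" using mem_I[OF Cw x(2,3), of c s] c Cw x by auto
    then show ?thesis by blast
  qed
  have neq: "I_set (n+2) (ext C) x \<noteq> I_set (n+2) (ext C) y"
    if xy: "x \<in> words (n+2)" "y \<in> words (n+2)" "hamming x y = 1" for x y
  proof -
    obtain u s where x: "x = u@s" "u \<in> words n" "s \<in> words 2" using split_word[OF xy(1)] by blast
    obtain v t where y: "y = v@t" "v \<in> words n" "t \<in> words 2" using split_word[OF xy(2)] by blast
    have luv: "length u = length v" using x y by (auto simp: words_def)
    have h: "hamming u v + hamming s t = 1" using ham_app[OF luv] xy x y by simp
    have ham1: "hamming a b = 1" if "a \<in> words n" "b \<in> words n" "hamming a b \<le> 1" "a \<noteq> b" for a b
      using ham_0[of a b] that by (auto simp: words_def)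
    have MI: "\<And>a p c r. a \<in> words n \<Longrightarrow> p \<in> words 2 \<Longrightarrow> c \<in> words n \<Longrightarrow> r \<in> words 2 \<Longrightarrow>
        c@r \<in> I_set (n+2) (ext C) (a@p) \<longleftrightarrow> c \<in> C \<and> hamming a c + hamming p r \<le> 1"
      using mem_I[OF Cw] by blast
    show ?thesis
    proof (cases "hamming u v = 0")
      case True
      then have uv: "u = v" using ham_0[OF luv] by simp
      have st: "hamming s t = 1" using h True by simp
      show ?thesis
      proof (cases "u \<in> C")
        case True
        obtain r where r: "r \<in> words 2" "hamming s r = 1" "hamming t r > 1" using w2_adj2[OF x(3) y(3) st] by blast
        have "u@r \<in> I_set (n+2) (ext C) x" using MI[OF x(2,3) x(2) r(1)] True r x x(1) by simp
        moreover have "u@r \<notin> I_set (n+2) (ext C) y" using MI[OF y(2,3) x(2) r(1)] r y uv y(1) by simp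
        ultimately show ?thesis by blast
      next
        case False
        obtain c where c: "c \<in> C" "hamming u c \<le> 1" using cov' x by blast
        have cw: "c \<in> words n" using c Cw by auto
        have "c \<noteq> u" using False c by auto
        then have hc: "hamming u c = 1" using ham1[OF x(2) cw c(2)] by simp
        have "c@s \<in> I_set (n+2) (ext C) x" using MI[OF x(2,3) cw x(3)] c hc x(1) by simp
        moreover have "c@s \<notin> I_set (n+2) (ext C) y" using MI[OF y(2,3) cw x(3)] hc uv st ham_sym[of t s] y(1) by simp
        ultimately show ?thesis by blast
      qed
    next
      case False
      then have huv: "hamming u v = 1" and st: "s = t" using h ham_0[of s t] x y by (auto simp: words_def)
      have uv: "u \<noteq> v" using huv by auto
      obtain r where r: "r \<in> words 2" "hamming s r = 1" using w2_adj[OF x(3)] by blast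
      show ?thesis
      proof (cases "u \<in> C")
        case True
        have "u@r \<in> I_set (n+2) (ext C) x" using MI[OF x(2,3) x(2) r(1)] True r x(1) by simp
        moreover have "u@r \<notin> I_set (n+2) (ext C) y" using MI[OF y(2,3) x(2) r(1)] r st huv ham_sym[of v u] y(1) by simp
        ultimately show ?thesis by blast
      next
        case uC: False
        show ?thesis
        proof (cases "v \<in> C")
          case True
          have "v@r \<notin> I_set (n+2) (ext C) x" using MI[OF x(2,3) y(2) r(1)] r huv x(1) by simp
          moreover have "v@r \<in> I_set (n+2) (ext C) y" using MI[OF y(2,3) y(2) r(1)] True r st y(1) by simp
          ultimately show ?thesis by blast
        next
          case vC: False
          obtain c where c: "c \<in> C" "hamming u c \<le> 1" using cov' x by blast
          have cw: "c \<in> words n" using c Cw by auto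
          have "c \<noteq> u" using uC c by auto
          then have hc: "hamming u c = 1" using ham1[OF x(2) cw c(2)] by simp
          have "c@s \<in> I_set (n+2) (ext C) x" using MI[OF x(2,3) cw x(3)] c hc x(1) by simp
          moreover have "c@s \<notin> I_set (n+2) (ext C) y"
          proof
            assume "c@s \<in> I_set (n+2) (ext C) y"
            then have "hamming v c \<le> 1" using MI[OF y(2,3) cw x(3)] st y(1) by simp
            moreover have "c \<noteq> v" using vC c by auto
            ultimately have "hamming v c = 1" using ham1[OF y(2) cw] by simp
            moreover have "even (hamming c u + hamming c v + hamming u v)"
              using ham_par[of c u v] cw x y by (auto simp: words_def)
            ultimately show False using hc huv ham_sym[of c u] ham_sym[of c v] by simp
          qed
          ultimately show ?thesis by blast
        qed
      qed
    qed
  qed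
  have "ext C \<noteq> {}" using ne unfolding ext_def words2 by auto
  then show ?thesis unfolding local_identifying_code_def covering_code_def
    using subw cover neq by blast
qed

lemma card_ext: assumes "C \<subseteq> words n" shows "card (ext C) = 4 * card C"
proof -
  have fin: "finite C" using assms finite_words finite_subset by blast
  have "inj_on (\<lambda>(c,r). c @ r) (C \<times> words 2)"
    using assms by (auto simp: inj_on_def words_def append_eq_append_conv)
  then have "card (ext C) = card (C \<times> words 2)" unfolding ext_def by (rule card_image)
  also have "\<dots> = card C * 4" by (simp add: card_cartesian_product card_w2)
  finally show ?thesis by simp
qed

theorem mainTheorem8:
  fixes n :: nat
  assumes "n \<ge> 1"
  shows "M_L (n + 2) \<le> 4 * K n"
proof -
  have "covering_code n (words n)"
    unfolding covering_code_def I_set_def closed_nbhd_def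
    by (auto simp: words_def intro!: exI[of _ "replicate n False"])
  then have "\<exists>k. \<exists>C. covering_code n C \<and> card C = k" by blast
  then have "\<exists>C. covering_code n C \<and> card C = K n"
    unfolding K_def by (rule LeastI_ex[where P="\<lambda>k. \<exists>C. covering_code n C \<and> card C = k"])
  then obtain C where C: "covering_code n C" "card C = K n" by blast
  have "local_identifying_code (n+2) (ext C)" by (rule ext_code[OF C(1)])
  moreover have "card (ext C) = 4 * K n" using card_ext C unfolding covering_code_def by auto
  ultimately show ?thesis unfolding M_L_def by (metis (mono_tags, lifting) Least_le)
qed

end
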